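(* For every $n\ge 15$ of the form $n=2^k-1$ there exist binary perfect (1-error-correcting) homogeneous codes of length $n$ that are not transitive.
   Context: A binary code $C\subseteq F^n$ containing $0^n$ is perfect if every $x\in F^n$ is at Hamming distance at most one from exactly one codeword. For $y\in C$, $STS(C,y)=\{\mathrm{supp}(x+y)\mid x\in C,\ d(x,y)=3\}$; $C$ is homogeneous if for every $y\in C$ there is $\pi\in S_n$ with $\pi(STS(C,y))=STS(C,0^n)$. $C$ is transitive if for every $y\in C$ there is a coordinate permutation $\pi\in S_n$ with $y+\pi(C)=C$ (equivalently, $\mathrm{Aut}(C)=\{(y,\pi)\mid y+\pi(C)=C\}$ has a subgroup acting transitively on $C$). *)

theory Defs
  imports Main "HOL-Combinatorics.Permutations"
begin

text \<open>Binary words of length n are represented by their supports, i.e. subsets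
of the coordinate set {0..<n}. Vector addition over F_2 is symmetric difference,
the Hamming distance is the cardinality of the symmetric difference, and the
all-zero word 0^n is the empty set.\<close>

definition words :: "nat \<Rightarrow> nat set set" where
  "words n = Pow {0..<n}"

definition wadd :: "nat set \<Rightarrow> nat set \<Rightarrow> nat set" where
  "wadd x y = (x - y) \<union> (y - x)"

definition hdist :: "nat set \<Rightarrow> nat set \<Rightarrow> nat" where
  "hdist x y = card (wadd x y)"

definition perfect_code :: "nat \<Rightarrow> nat set set \<Rightarrow> bool" where
  "perfect_code n C \<longleftrightarrow> C \<subseteq> words n \<and> {} \<in> C \<and>
     (\<forall>x \<in> words n. \<exists>!c. c \<in> C \<and> hdist x c \<le> 1)"

definition STS :: "nat set set \<Rightarrow> nat set \<Rightarrow> nat set set" where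
  "STS C y = {wadd x y | x. x \<in> C \<and> hdist x y = 3}"

definition perm_word :: "(nat \<Rightarrow> nat) \<Rightarrow> nat set \<Rightarrow> nat set" where
  "perm_word \<pi> x = \<pi> ` x"

definition perm_code :: "(nat \<Rightarrow> nat) \<Rightarrow> nat set set \<Rightarrow> nat set set" where
  "perm_code \<pi> C = perm_word \<pi> ` C"

definition homogeneous_code :: "nat \<Rightarrow> nat set set \<Rightarrow> bool" where
  "homogeneous_code n C \<longleftrightarrow>
     (\<forall>y \<in> C. \<exists>\<pi>. \<pi> permutes {0..<n} \<and> perm_code \<pi> (STS C y) = STS C {})"

definition transitive_code :: "nat \<Rightarrow> nat set set \<Rightarrow> bool" where
  "transitive_code n C \<longleftrightarrow>
     (\<forall>y \<in> C. \<exists>\<pi>. \<pi> permutes {0..<n} \<and> wadd y ` perm_code \<pi> C = C)"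

end

theory Submission
  imports Defs
begin
unbundle bit_operations_syntax

global_interpretation X: comm_monoid_set "xor :: nat \<Rightarrow> nat \<Rightarrow> nat" 0
  defines xsum = X.F ..

lemma xsum_wadd:
  assumes "finite a" "finite b"
  shows "xsum f (wadd a b) = xsum f a XOR xsum f b"
proof -
  have e1: "a = (a - b) \<union> (a \<inter> b)" by blast
  have e2: "b = (b - a) \<union> (a \<inter> b)" by blast
  have "xsum f a = xsum f (a - b) XOR xsum f (a \<inter> b)"
    by (subst e1, rule X.union_disjoint) (use assms in auto)
  moreover have "xsum f b = xsum f (b - a) XOR xsum f (a \<inter> b)"
    by (subst e2, rule X.union_disjoint) (use assms in auto)
  moreover have "xsum f (wadd a b) = xsum f (a - b) XOR xsum f (b - a)"
    unfolding wadd_def by (rule X.union_disjoint) (use assms in auto)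
  ultimately show ?thesis
    by (metis xor.assoc xor.commute xor.left_commute xor_self_eq xor.right_neutral)
qed

lemma xsum_less:
  assumes "finite A" "\<And>j. j \<in> A \<Longrightarrow> f j < 2 ^ k"
  shows "xsum f A < 2 ^ k"
  using assms
proof (induction A rule: finite_induct)
  case empty then show ?case by simp
next
  case (insert x F)
  have "take_bit k (f x XOR xsum f F) = f x XOR xsum f F"
  proof -
    have "take_bit k (f x) = f x" "take_bit k (xsum f F) = xsum f F"
      using insert by (auto simp add: take_bit_nat_eq_self_iff)
    then show ?thesis by simp
  qed
  then have "f x XOR xsum f F < 2 ^ k" by (metis take_bit_nat_eq_self_iff)
  then show ?case using insert by simp
qed


definition rho :: "nat \<Rightarrow> nat" where "rho u = (if u = 0 then 0 else 2 ^ u)"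
definition uu :: "nat \<Rightarrow> nat" where "uu w = (w div 2) mod 8"
definition Sy :: "nat set \<Rightarrow> nat" where "Sy z = xsum (\<lambda>j. j + 1) z"
definition Ry :: "nat set \<Rightarrow> nat" where "Ry z = xsum (\<lambda>j. rho (uu (j + 1))) z"
definition K :: "nat \<Rightarrow> (nat \<Rightarrow> nat) \<Rightarrow> nat set set" where
  "K n g = {z \<in> words n. Sy z = g (Ry z)}"
definition W3 :: "nat \<Rightarrow> (nat \<Rightarrow> nat) \<Rightarrow> nat set set" where
  "W3 n g = {b \<in> K n g. card b = 3}"
definition good :: "(nat \<Rightarrow> nat) \<Rightarrow> bool" where
  "good g \<longleftrightarrow> g 0 = 0 \<and> (\<forall>r. g r \<le> 1)"
definition shf :: "(nat \<Rightarrow> nat) \<Rightarrow> nat \<Rightarrow> nat \<Rightarrow> nat" where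
  "shf g d r = g (r XOR d) XOR g d"

lemma words_finite: "z \<in> words n \<Longrightarrow> finite z"
  unfolding words_def by (auto intro: finite_subset)

lemma wadd_words: "x \<in> words n \<Longrightarrow> y \<in> words n \<Longrightarrow> wadd x y \<in> words n"
  unfolding words_def wadd_def by auto

lemma wadd_inv[simp]: "wadd y (wadd y z) = z"
  unfolding wadd_def by auto

lemma wadd_comm: "wadd x y = wadd y x"
  unfolding wadd_def by auto

lemma wadd_empty[simp]: "wadd {} z = z" "wadd z {} = z"
  unfolding wadd_def by auto

lemma Sy_wadd: "finite a \<Longrightarrow> finite b \<Longrightarrow> Sy (wadd a b) = Sy a XOR Sy b"
  unfolding Sy_def by (rule xsum_wadd)

lemma Ry_wadd: "finite a \<Longrightarrow> finite b \<Longrightarrow> Ry (wadd a b) = Ry a XOR Ry b"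
  unfolding Ry_def by (rule xsum_wadd)

lemma le1_cases: "(a::nat) \<le> 1 \<Longrightarrow> a = 0 \<or> a = 1" by auto

lemma xor01: "(a::nat) \<le> 1 \<Longrightarrow> b \<le> 1 \<Longrightarrow> a XOR b \<le> 1"
  using le1_cases[of a] le1_cases[of b] by auto

lemma good_shf: "good g \<Longrightarrow> good (shf g d)"
  unfolding good_def shf_def using xor01 by (simp del: One_nat_def)

lemma xor_cancel1[simp]: "(a::nat) XOR (a XOR b) = b"
  by (simp add: xor.assoc[symmetric])

lemma xor_cancel2[simp]: "((a::nat) XOR b) XOR a = b"
  by (metis xor.commute xor_cancel1)

lemma xor_cancel3[simp]: "((b::nat) XOR a) XOR a = b"
  by (simp add: xor.assoc)

lemma K_trans:
  assumes g: "good g" and y: "y \<in> K n g"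
  shows "wadd y ` K n g = K n (shf g (Ry y))"
proof
  have yw: "y \<in> words n" and yS: "Sy y = g (Ry y)" using y by (auto simp: K_def)
  show "wadd y ` K n g \<subseteq> K n (shf g (Ry y))"
  proof
    fix w assume "w \<in> wadd y ` K n g"
    then obtain z where z: "z \<in> K n g" and w: "w = wadd y z" by auto
    have zw: "z \<in> words n" and zS: "Sy z = g (Ry z)" using z by (auto simp: K_def)
    have fy: "finite y" "finite z" using yw zw by (auto intro: words_finite)
    have "Sy w = g (Ry y) XOR g (Ry z)" using fy yS zS w by (simp add: Sy_wadd)
    moreover have "Ry w = Ry y XOR Ry z" using fy w by (simp add: Ry_wadd)
    ultimately have "Sy w = shf g (Ry y) (Ry w)"
      unfolding shf_def by (simp add: xor.commute)
    moreover have "w \<in> words n" using w yw zw by (simp add: wadd_words)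
    ultimately show "w \<in> K n (shf g (Ry y))" by (simp add: K_def)
  qed
  show "K n (shf g (Ry y)) \<subseteq> wadd y ` K n g"
  proof
    fix w assume w: "w \<in> K n (shf g (Ry y))"
    have ww: "w \<in> words n" and wS: "Sy w = shf g (Ry y) (Ry w)" using w by (auto simp: K_def)
    define z where "z = wadd y w"
    have fy: "finite y" "finite w" using yw ww by (auto intro: words_finite)
    have "Sy z = g (Ry y) XOR (g (Ry w XOR Ry y) XOR g (Ry y))"
      using fy yS wS by (simp add: z_def Sy_wadd shf_def)
    also have "\<dots> = g (Ry w XOR Ry y)" by (metis xor.commute xor_cancel1)
    also have "Ry w XOR Ry y = Ry z" using fy by (simp add: z_def Ry_wadd xor.commute)
    finally have "Sy z = g (Ry z)" .
    moreover have "z \<in> words n" using yw ww by (simp add: z_def wadd_words)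
    ultimately have "z \<in> K n g" by (simp add: K_def)
    moreover have "w = wadd y z" by (simp add: z_def)
    ultimately show "w \<in> wadd y ` K n g" by blast
  qed
qed

lemma STS_alt: "STS C y = {w \<in> wadd y ` C. card w = 3}"
  unfolding STS_def hdist_def by (auto simp: wadd_comm)

lemma STS_K:
  assumes "good g" "y \<in> K n g"
  shows "STS (K n g) y = W3 n (shf g (Ry y))"
  using K_trans[OF assms] by (simp add: STS_alt W3_def)

lemma STS_K0: "STS (K n g) {} = W3 n g"
  by (simp add: STS_alt W3_def)

lemma Sy_single: "finite x \<Longrightarrow> Sy (wadd x {j}) = Sy x XOR (j + 1)"
  by (simp add: Sy_wadd, simp add: Sy_def)

lemma Ry_single: "finite x \<Longrightarrow> Ry (wadd x {j}) = Ry x XOR rho (uu (j + 1))"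
  by (simp add: Ry_wadd, simp add: Ry_def)

lemma neighbors:
  assumes x: "x \<in> words n"
  shows "(c \<in> words n \<and> hdist x c \<le> 1) \<longleftrightarrow> (c = x \<or> (\<exists>j<n. c = wadd x {j}))"
proof
  assume a: "c \<in> words n \<and> hdist x c \<le> 1"
  have fin: "finite (wadd x c)" using a x by (auto intro: words_finite simp: wadd_def)
  have sub: "wadd x c \<subseteq> {0..<n}" using a x by (auto simp: words_def wadd_def)
  have "card (wadd x c) = 0 \<or> card (wadd x c) = 1" using a by (auto simp: hdist_def)
  then show "c = x \<or> (\<exists>j<n. c = wadd x {j})"
  proof
    assume "card (wadd x c) = 0"
    then have "wadd x c = {}" using fin by simp
    then show ?thesis by (metis wadd_inv wadd_empty(2))
  next
    assume "card (wadd x c) = 1"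
    then obtain j where j: "wadd x c = {j}" by (auto simp: card_Suc_eq)
    then have "j < n" using sub by auto
    moreover have "c = wadd x {j}" by (metis j wadd_inv)
    ultimately show ?thesis by blast
  qed
next
  assume "c = x \<or> (\<exists>j<n. c = wadd x {j})"
  then show "c \<in> words n \<and> hdist x c \<le> 1"
  proof
    assume "c = x" then show ?thesis using x by (simp add: hdist_def wadd_def)
  next
    assume "\<exists>j<n. c = wadd x {j}"
    then obtain j where j: "j < n" "c = wadd x {j}" by auto
    have "{j} \<in> words n" using j by (simp add: words_def)
    then show ?thesis using j x by (simp add: hdist_def wadd_words)
  qed
qed

lemma xor_le1_div2: "v \<le> 1 \<Longrightarrow> ((a::nat) XOR v) div 2 = a div 2"
proof -
  assume v: "v \<le> 1"
  have "drop_bit 1 (a XOR v) = drop_bit 1 a XOR drop_bit 1 v" by simp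
  moreover have "drop_bit 1 v = 0" using le1_cases[OF v] by auto
  ultimately show ?thesis by (simp add: drop_bit_eq_div)
qed

lemma uu_xor_le1: "v \<le> 1 \<Longrightarrow> uu (a XOR v) = uu a"
  by (simp add: uu_def xor_le1_div2)

lemma xor_le1_small: "(a::nat) \<le> 1 \<Longrightarrow> a XOR b \<le> 1 \<Longrightarrow> b \<le> 1"
  by (metis xor01 xor_cancel1)

lemma perfect_K:
  assumes n: "n = 2 ^ k - 1" and k: "k \<ge> 1" and g: "good g"
  shows "perfect_code n (K n g)"
proof -
  have g0: "g 0 = 0" and g1: "\<And>r. g r \<le> 1" using g by (auto simp: good_def)
  have p2: "(2::nat) \<le> 2 ^ k" using power_increasing[OF k, of "2::nat"] by simp
  have npos: "0 < n" using n p2 by simp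
  have sub: "K n g \<subseteq> words n" by (auto simp: K_def)
  have emp: "{} \<in> K n g" using g0 by (simp add: K_def words_def Sy_def Ry_def)
  have "\<exists>!c. c \<in> K n g \<and> hdist x c \<le> 1" if x: "x \<in> words n" for x
  proof -
    have fx: "finite x" using x by (rule words_finite)
    define a where "a = Sy x"
    have alt: "a < 2 ^ k" unfolding a_def Sy_def
      by (rule xsum_less[OF fx]) (use x n in \<open>auto simp: words_def\<close>)
    have nb: "\<And>c. c \<in> K n g \<and> hdist x c \<le> 1 \<longleftrightarrow>
       (c = x \<or> (\<exists>j<n. c = wadd x {j})) \<and> Sy c = g (Ry c)"
      using neighbors[OF x] by (auto simp: K_def)
    have Kx: "\<And>j. Sy (wadd x {j}) = a XOR (j + 1)" "\<And>j. Ry (wadd x {j}) = Ry x XOR rho (uu (j + 1))"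
      using fx by (auto simp: a_def Sy_single Ry_single)
    show ?thesis
    proof (cases "a \<le> 1")
      case True
      \<comment> \<open>any neighbor codeword different from x is x + e_0\<close>
      have j0: "j = 0" if "a XOR (j + 1) \<le> 1" for j
      proof -
        have "j + 1 \<le> 1" using xor_le1_small[OF True that] .
        then show ?thesis by simp
      qed
      have r1: "rho (uu 1) = 0" by (simp add: rho_def uu_def)
      show ?thesis
      proof (cases "a = g (Ry x)")
        case True
        show ?thesis
        proof (rule ex1I[of _ x])
          show "x \<in> K n g \<and> hdist x x \<le> 1" using nb True by (simp add: a_def)
        next
          fix c assume c: "c \<in> K n g \<and> hdist x c \<le> 1"
          then have cc: "(c = x \<or> (\<exists>j<n. c = wadd x {j})) \<and> Sy c = g (Ry c)" using nb by blast
          show "c = x"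
          proof (rule ccontr)
            assume "c \<noteq> x"
            then obtain j where j: "j < n" "c = wadd x {j}" using cc by auto
            have "a XOR (j + 1) = g (Ry x XOR rho (uu (j + 1)))" using cc j Kx by simp
            then have "a XOR (j+1) \<le> 1" using g1 by simp
            then have "j = 0" by (rule j0)
            then have "a XOR 1 = g (Ry x)" using cc j Kx r1 by simp
            then show False using \<open>a = g (Ry x)\<close> by (metis xor_cancel1 xor_self_eq zero_neq_one)
          qed
        qed
      next
        case False
        have val: "a XOR 1 = g (Ry x)"
          using le1_cases[OF \<open>a \<le> 1\<close>] le1_cases[OF g1[of "Ry x"]] False by auto
        show ?thesis
        proof (rule ex1I[of _ "wadd x {0}"])
          show "wadd x {0} \<in> K n g \<and> hdist x (wadd x {0}) \<le> 1"
            using nb npos Kx val r1 by auto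
        next
          fix c assume c: "c \<in> K n g \<and> hdist x c \<le> 1"
          then have cc: "(c = x \<or> (\<exists>j<n. c = wadd x {j})) \<and> Sy c = g (Ry c)" using nb by blast
          have "c \<noteq> x" using cc False by (auto simp: a_def)
          then obtain j where j: "j < n" "c = wadd x {j}" using cc by auto
          have "a XOR (j + 1) = g (Ry x XOR rho (uu (j + 1)))" using cc j Kx by simp
          then have "a XOR (j+1) \<le> 1" using g1 by simp
          then have "j = 0" by (rule j0)
          then show "c = wadd x {0}" using j by simp
        qed
      qed
    next
      case False
      define v where "v = g (Ry x XOR rho (uu a))"
      have v1: "v \<le> 1" using g1 by (simp add: v_def)
      have d2: "(a XOR v) div 2 = a div 2" by (rule xor_le1_div2[OF v1])
      have ge2: "a XOR v \<ge> 2"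
      proof -
        have "\<And>t::nat. t div 2 = a div 2 \<Longrightarrow> \<not> a \<le> 1 \<Longrightarrow> t \<ge> 2" by presburger
        then show ?thesis using d2 False by blast
      qed
      have lt: "a XOR v < 2 ^ k"
      proof -
        have "v < 2 ^ k" using v1 p2 by simp
        then have "take_bit k v = v" by (simp add: take_bit_nat_eq_self_iff)
        moreover have "take_bit k a = a" using alt by (simp add: take_bit_nat_eq_self_iff)
        ultimately have "take_bit k (a XOR v) = a XOR v" by simp
        then show ?thesis by (metis take_bit_nat_eq_self_iff)
      qed
      define j0 where "j0 = (a XOR v) - 1"
      have j0n: "j0 < n" using lt ge2 n by (simp add: j0_def)
      have j0l: "j0 + 1 = a XOR v" using ge2 by (simp add: j0_def)
      have uj: "uu (j0 + 1) = uu a" using j0l uu_xor_le1[OF v1] by simp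
      show ?thesis
      proof (rule ex1I[of _ "wadd x {j0}"])
        show "wadd x {j0} \<in> K n g \<and> hdist x (wadd x {j0}) \<le> 1"
          using nb j0n Kx j0l uj by (auto simp: v_def)
      next
        fix c assume c: "c \<in> K n g \<and> hdist x c \<le> 1"
        then have cc: "(c = x \<or> (\<exists>j<n. c = wadd x {j})) \<and> Sy c = g (Ry c)" using nb by blast
        have "c \<noteq> x" using cc False g1 by (metis a_def)
        then obtain j where j: "j < n" "c = wadd x {j}" using cc by auto
        define v' where "v' = a XOR (j + 1)"
        have e: "v' = g (Ry x XOR rho (uu (j + 1)))" using cc j Kx by (simp add: v'_def)
        then have v'1: "v' \<le> 1" using g1 by simp
        have jv: "j + 1 = a XOR v'" by (simp add: v'_def)
        have "uu (j + 1) = uu a" using jv uu_xor_le1[OF v'1] by simp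
        then have "v' = v" using e by (simp add: v_def)
        then have "j + 1 = j0 + 1" using jv j0l by simp
        then show "c = wadd x {j0}" using j by simp
      qed
    qed
  qed
  then show ?thesis using sub emp by (simp add: perfect_code_def)
qed

lemma all8: "(\<forall>u::nat<8. P u) = (P 0 \<and> P 1 \<and> P 2 \<and> P 3 \<and> P 4 \<and> P 5 \<and> P 6 \<and> P 7)"
proof -
  have "(\<forall>u::nat<8. P u) = (\<forall>u\<in>{..<8}. P u)" by auto
  also have "\<dots> = (P 0 \<and> P 1 \<and> P 2 \<and> P 3 \<and> P 4 \<and> P 5 \<and> P 6 \<and> P 7)"
    by (simp add: lessThan_nat_numeral lessThan_Suc conj_ac)
  finally show ?thesis .
qed

lemma d16x: "((a::nat) XOR b) div 16 = (a div 16) XOR (b div 16)"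
proof -
  have "drop_bit 4 (a XOR b) = drop_bit 4 a XOR drop_bit 4 b" by simp
  then show ?thesis by (simp add: drop_bit_eq_div)
qed

lemma m2x: "((a::nat) XOR b) mod 2 = (a mod 2) XOR (b mod 2)"
proof -
  have "take_bit 1 (a XOR b) = take_bit 1 a XOR take_bit 1 b" by simp
  then show ?thesis by (simp add: take_bit_eq_mod)
qed

lemma uux: "uu ((a::nat) XOR b) = uu a XOR uu b"
proof -
  have "take_bit 3 (drop_bit 1 (a XOR b)) = take_bit 3 (drop_bit 1 a) XOR take_bit 3 (drop_bit 1 b)" by simp
  then show ?thesis by (simp add: take_bit_eq_mod drop_bit_eq_div uu_def)
qed

lemma uu_lt: "uu w < 8" by (simp add: uu_def)

lemma xor_lt8: "(a::nat) < 8 \<Longrightarrow> b < 8 \<Longrightarrow> a XOR b < 8"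
proof -
  assume "a < 8" "b < 8"
  then have "take_bit 3 a = a" "take_bit 3 b = b" by (auto simp: take_bit_nat_eq_self_iff)
  then have "take_bit 3 (a XOR b) = a XOR b" by simp
  then have "a XOR b < 2 ^ 3" by (metis take_bit_nat_eq_self_iff)
  then show ?thesis by simp
qed

lemma decomp: "(x::nat) = 16 * (x div 16) + 2 * uu x + x mod 2"
proof -
  have "x mod (2 * 8) = 2 * (x div 2 mod 8) + x mod 2" by (rule mod_mult2_eq)
  then have "x mod 16 = 2 * uu x + x mod 2" by (simp add: uu_def)
  moreover have "x = 16 * (x div 16) + x mod 16" by simp
  ultimately show ?thesis by simp
qed

lemma eq01: "(c::nat) \<le> 1 \<Longrightarrow> (x = c) \<longleftrightarrow> (x div 16 = 0 \<and> uu x = 0 \<and> x mod 2 = c)"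
proof
  assume c: "c \<le> 1" and "x = c"
  then have "x = 0 \<or> x = 1" by auto
  then show "x div 16 = 0 \<and> uu x = 0 \<and> x mod 2 = c" using \<open>x = c\<close> by (auto simp: uu_def)
next
  assume c: "c \<le> 1" and h: "x div 16 = 0 \<and> uu x = 0 \<and> x mod 2 = c"
  then show "x = c" using decomp[of x] by simp
qed

lemma comp_parts:
  assumes "A < 8" "E \<le> (1::nat)"
  shows "(16 * q + 2 * A + E) div 16 = q" "uu (16 * q + 2 * A + E) = A" "(16 * q + 2 * A + E) mod 2 = E"
proof -
  have e: "E = 0 \<or> E = 1" using assms by auto
  have "(16 * q + (2 * A + E)) div 16 = q + (2 * A + E) div 16" by simp
  moreover have "(2 * A + E) div 16 = 0" using assms by simp
  ultimately show "(16 * q + 2 * A + E) div 16 = q" by (simp add: add.assoc)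
  have "(16 * q + 2 * A + E) div 2 = 8 * q + A" using e by auto
  then show "uu (16 * q + 2 * A + E) = A" using assms by (simp add: uu_def)
  have "16 * q + 2 * A + E = E + 2 * (8 * q + A)" by simp
  then show "(16 * q + 2 * A + E) mod 2 = E" using e by (metis mod_mult_self2 mod_less one_less_numeral_iff semiring_norm(76) zero_less_numeral)
qed

subsection \<open>Coordinate permutations\<close>

definition bb :: "nat \<Rightarrow> nat \<Rightarrow> nat" where "bb bm u = (bm div 2 ^ u) mod 2"

lemma bb_le1: "bb bm u \<le> 1" by (simp add: bb_def del: One_nat_def)

definition sig :: "(nat \<Rightarrow> nat) \<Rightarrow> nat \<Rightarrow> nat \<Rightarrow> nat" where
  "sig al bm w = 16 * (w div 16) + 2 * al (uu w) + ((w mod 2) XOR bb bm (uu w))"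

definition pp :: "nat \<Rightarrow> (nat \<Rightarrow> nat) \<Rightarrow> nat \<Rightarrow> nat \<Rightarrow> nat" where
  "pp n al bm j = (if j < n then sig al bm (j + 1) - 1 else j)"

definition linal :: "(nat \<Rightarrow> nat) \<Rightarrow> bool" where
  "linal al \<longleftrightarrow> al 0 = 0 \<and> (\<forall>u<8. al u < 8) \<and> (\<forall>a<8. \<forall>b<8. al a = al b \<longrightarrow> a = b)
     \<and> (\<forall>a<8. \<forall>b<8. al (a XOR b) = al a XOR al b)"

lemma mod2_xor_le1: "((w::nat) mod 2) XOR bb bm u \<le> 1"
  by (rule xor01) (auto simp del: One_nat_def simp add: bb_le1)

lemma sig_parts:
  assumes "linal al"
  shows "sig al bm w div 16 = w div 16" "uu (sig al bm w) = al (uu w)"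
    "sig al bm w mod 2 = (w mod 2) XOR bb bm (uu w)"
proof -
  have A: "al (uu w) < 8" using assms uu_lt by (simp add: linal_def)
  have E: "((w mod 2) XOR bb bm (uu w)) \<le> 1" by (rule mod2_xor_le1)
  show "sig al bm w div 16 = w div 16" "uu (sig al bm w) = al (uu w)"
    "sig al bm w mod 2 = (w mod 2) XOR bb bm (uu w)"
    unfolding sig_def using comp_parts[OF A E] by auto
qed

lemma sig_inj:
  assumes al: "linal al" and e: "sig al bm w1 = sig al bm w2"
  shows "w1 = w2"
proof -
  have q: "w1 div 16 = w2 div 16" using sig_parts(1)[OF al] e by metis
  have "al (uu w1) = al (uu w2)" using sig_parts(2)[OF al] e by metis
  then have u: "uu w1 = uu w2" using al uu_lt by (simp add: linal_def)
  have "(w1 mod 2) XOR bb bm (uu w1) = (w2 mod 2) XOR bb bm (uu w2)"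
    using sig_parts(3)[OF al] e by metis
  then have m: "w1 mod 2 = w2 mod 2" using u by (metis xor_cancel3)
  show ?thesis using decomp[of w1] decomp[of w2] q u m by simp
qed

lemma sig_pos:
  assumes al: "linal al" and b0: "bb bm 0 = 0" and w: "w \<ge> 1"
  shows "sig al bm w \<ge> 1"
proof (rule ccontr)
  assume "\<not> sig al bm w \<ge> 1"
  then have z: "sig al bm w = 0" by simp
  have q: "w div 16 = 0" using sig_parts(1)[OF al, of bm w] z by simp
  have "al (uu w) = 0" using sig_parts(2)[OF al, of bm w] z by (simp add: uu_def)
  then have u: "uu w = 0" using al uu_lt by (auto simp: linal_def)
  have "(w mod 2) XOR bb bm (uu w) = 0" using sig_parts(3)[OF al, of bm w] z by simp
  then have m: "w mod 2 = 0" using u b0 by simp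
  show False using decomp[of w] q u m w by simp
qed

lemma sig_lt:
  assumes al: "linal al" and k: "k \<ge> 4" and w: "w < 2 ^ k"
  shows "sig al bm w < 2 ^ k"
proof -
  define M where "M = (2::nat) ^ (k - 4)"
  have "(2::nat) ^ k = 2 ^ (4 + (k - 4))" using k by simp
  also have "\<dots> = 2 ^ 4 * 2 ^ (k - 4)" by (rule power_add)
  finally have kM: "(2::nat) ^ k = 16 * M" unfolding M_def by simp
  have q: "w div 16 < M" using w kM by (simp add: less_mult_imp_div_less mult.commute)
  have A: "al (uu w) < 8" using al uu_lt by (simp add: linal_def)
  have E: "((w mod 2) XOR bb bm (uu w)) \<le> 1" by (rule mod2_xor_le1)
  have "sig al bm w < 16 * (w div 16) + 16" unfolding sig_def using A E by linarith
  also have "\<dots> \<le> 16 * M" using q by simp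
  finally show ?thesis using kM by simp
qed

lemma pp_lab:
  assumes al: "linal al" and b0: "bb bm 0 = 0" and j: "j < n"
  shows "pp n al bm j + 1 = sig al bm (j + 1)"
  using sig_pos[OF al b0, of "j+1"] j by (simp add: pp_def)

lemma pp_perm:
  assumes n: "n = 2 ^ k - 1" and k: "k \<ge> 4" and al: "linal al" and b0: "bb bm 0 = 0"
  shows "pp n al bm permutes {0..<n}"
proof -
  let ?p = "pp n al bm"
  have into: "?p j < n" if j: "j < n" for j
  proof -
    have "j + 1 < 2 ^ k" using j n by simp
    then have "sig al bm (j + 1) < 2 ^ k" by (rule sig_lt[OF al k])
    then show ?thesis using pp_lab[OF al b0 j] n by simp
  qed
  have inj: "inj_on ?p {0..<n}"
  proof (rule inj_onI)
    fix x y assume x: "x \<in> {0..<n}" and y: "y \<in> {0..<n}" and e: "?p x = ?p y"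
    have "sig al bm (x + 1) = sig al bm (y + 1)"
      using pp_lab[OF al b0, of x n] pp_lab[OF al b0, of y n] x y e by simp
    then have "x + 1 = y + 1" by (rule sig_inj[OF al])
    then show "x = y" by simp
  qed
  have "?p ` {0..<n} = {0..<n}" by (rule endo_inj_surj) (use into inj in auto)
  then have "bij_betw ?p {0..<n} {0..<n}" using inj by (simp add: bij_betw_def)
  moreover have "\<And>x. x \<notin> {0..<n} \<Longrightarrow> ?p x = x" by (simp add: pp_def)
  ultimately show ?thesis by (rule bij_imp_permutes)
qed

definition Cond :: "(nat \<Rightarrow> nat) \<Rightarrow> nat \<Rightarrow> (nat \<Rightarrow> nat) \<Rightarrow> (nat \<Rightarrow> nat) \<Rightarrow> bool" where
 "Cond al bm g1 g2 \<longleftrightarrow> (\<forall>u1<8. \<forall>u2<8. g1 (rho u1 XOR rho u2 XOR rho (u1 XOR u2)) =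
    g2 (rho (al u1) XOR rho (al u2) XOR rho (al (u1 XOR u2))) XOR (bb bm u1 XOR bb bm u2 XOR bb bm (u1 XOR u2)))"

lemma xor_eq0: "((a::nat) XOR b = 0) \<longleftrightarrow> a = b"
proof
  assume "a XOR b = 0"
  then have "a XOR (a XOR b) = a" by simp
  then show "a = b" by simp
qed simp

lemma lab_iff:
  assumes al: "linal al" and g1: "good g1" and g2: "good g2"
    and C: "Cond al bm g1 g2"
  shows "(w1 XOR w2 XOR w3 = g1 (rho (uu w1) XOR rho (uu w2) XOR rho (uu w3))) \<longleftrightarrow>
         (sig al bm w1 XOR sig al bm w2 XOR sig al bm w3 =
            g2 (rho (uu (sig al bm w1)) XOR rho (uu (sig al bm w2)) XOR rho (uu (sig al bm w3))))"
    (is "?L \<longleftrightarrow> ?R")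
proof -
  let ?s = "sig al bm"
  define u1 where "u1 = uu w1"
  define u2 where "u2 = uu w2"
  define u3 where "u3 = uu w3"
  have ul: "u1 < 8" "u2 < 8" "u3 < 8" using uu_lt by (auto simp: u1_def u2_def u3_def)
  have alin: "\<And>a b. a < 8 \<Longrightarrow> b < 8 \<Longrightarrow> al (a XOR b) = al a XOR al b"
    and al0: "al 0 = 0" and alinj: "\<And>a b. a < 8 \<Longrightarrow> b < 8 \<Longrightarrow> al a = al b \<Longrightarrow> a = b"
    using al by (auto simp: linal_def)
  have g1l: "\<And>r. g1 r \<le> 1" and g2l: "\<And>r. g2 r \<le> 1" using g1 g2 by (auto simp: good_def)
  define X where "X = w1 XOR w2 XOR w3"
  define Y where "Y = ?s w1 XOR ?s w2 XOR ?s w3"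
  have XD: "X div 16 = w1 div 16 XOR w2 div 16 XOR w3 div 16" by (simp add: X_def d16x)
  have YD: "Y div 16 = X div 16" by (simp add: Y_def XD d16x sig_parts[OF al])
  have XU: "uu X = u1 XOR u2 XOR u3" by (simp add: X_def uux u1_def u2_def u3_def)
  have YU: "uu Y = al u1 XOR al u2 XOR al u3" by (simp add: Y_def uux sig_parts[OF al] u1_def u2_def u3_def)
  have XM: "X mod 2 = w1 mod 2 XOR w2 mod 2 XOR w3 mod 2" by (simp add: X_def m2x)
  define B where "B = bb bm u1 XOR bb bm u2 XOR bb bm u3"
  have YM: "Y mod 2 = X mod 2 XOR B"
    by (simp add: Y_def XM m2x sig_parts[OF al] B_def u1_def u2_def u3_def xor.assoc xor.left_commute xor.commute)
  have u12: "u1 XOR u2 < 8" using ul by (simp add: xor_lt8)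
  have U: "al (u1 XOR u2 XOR u3) = al u1 XOR al u2 XOR al u3"
    using alin[OF ul(1) xor_lt8[OF ul(2) ul(3)]] alin[OF ul(2) ul(3)] by simp
  have LX: "?L \<longleftrightarrow> X = g1 (rho u1 XOR rho u2 XOR rho u3)" by (simp add: X_def u1_def u2_def u3_def)
  have RY: "?R \<longleftrightarrow> Y = g2 (rho (al u1) XOR rho (al u2) XOR rho (al u3))"
    by (simp add: Y_def u1_def u2_def u3_def sig_parts[OF al])
  define G where "G = rho u1 XOR rho u2 XOR rho u3"
  define G' where "G' = rho (al u1) XOR rho (al u2) XOR rho (al u3)"
  have EX: "X = g1 G \<longleftrightarrow> (X div 16 = 0 \<and> uu X = 0 \<and> X mod 2 = g1 G)" by (rule eq01[OF g1l])
  have EY: "Y = g2 G' \<longleftrightarrow> (Y div 16 = 0 \<and> uu Y = 0 \<and> Y mod 2 = g2 G')" by (rule eq01[OF g2l])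
  have LX': "?L \<longleftrightarrow> X = g1 G" using LX by (simp add: G_def)
  have RY': "?R \<longleftrightarrow> Y = g2 G'" using RY by (simp add: G'_def)
  show ?thesis
  proof (cases "u1 XOR u2 XOR u3 = 0")
    case False
    have lt: "u1 XOR u2 XOR u3 < 8" using ul by (simp add: xor_lt8)
    have "al (u1 XOR u2 XOR u3) \<noteq> 0" using alinj[OF lt, of 0] al0 False by auto
    then have "uu Y \<noteq> 0" using U YU by simp
    then have nR: "\<not> ?R" using RY' EY by metis
    have "uu X \<noteq> 0" using XU False by simp
    then have nL: "\<not> ?L" using LX' EX by metis
    show ?thesis using nL nR by blast
  next
    case True
    have u3: "u3 = u1 XOR u2" using True by (simp add: xor.assoc[symmetric] xor_eq0)
    have CC: "g1 G = g2 G' XOR B"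
      using C ul u3 unfolding Cond_def B_def G_def G'_def by auto
    have uY: "uu Y = 0" using U YU True al0 by simp
    have uX: "uu X = 0" using XU True by simp
    have "(X mod 2 = g1 G) \<longleftrightarrow> (X mod 2 XOR B = g2 G')"
      using CC by (metis xor_cancel3)
    then show ?thesis using LX' RY' EX EY uX uY YD YM by metis
  qed
qed

lemma Sy3: "a \<noteq> b \<Longrightarrow> b \<noteq> c \<Longrightarrow> a \<noteq> c \<Longrightarrow> Sy {a, b, c} = (a + 1) XOR (b + 1) XOR (c + 1)"
  by (simp add: Sy_def)

lemma Ry3: "a \<noteq> b \<Longrightarrow> b \<noteq> c \<Longrightarrow> a \<noteq> c \<Longrightarrow>
   Ry {a, b, c} = rho (uu (a + 1)) XOR rho (uu (b + 1)) XOR rho (uu (c + 1))"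
  by (simp add: Ry_def)

lemma triple_iff:
  assumes n: "n = 2 ^ k - 1" and k: "k \<ge> 4" and al: "linal al" and b0: "bb bm 0 = 0"
    and g1: "good g1" and g2: "good g2" and C: "Cond al bm g1 g2"
    and j: "j1 < n" "j2 < n" "j3 < n" "j1 \<noteq> j2" "j2 \<noteq> j3" "j1 \<noteq> j3"
  shows "{j1, j2, j3} \<in> K n g1 \<longleftrightarrow> {pp n al bm j1, pp n al bm j2, pp n al bm j3} \<in> K n g2"
proof -
  let ?p = "pp n al bm"
  have perm: "?p permutes {0..<n}" by (rule pp_perm[OF n k al b0])
  have inj: "inj ?p" by (rule permutes_inj[OF perm])
  have pin: "\<And>j. j < n \<Longrightarrow> ?p j < n"
    using permutes_in_image[OF perm] by auto
  have d: "?p j1 \<noteq> ?p j2" "?p j2 \<noteq> ?p j3" "?p j1 \<noteq> ?p j3" using inj j by (auto dest: injD)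
  have w1: "{j1, j2, j3} \<in> words n" using j by (simp add: words_def)
  have w2: "{?p j1, ?p j2, ?p j3} \<in> words n" using j pin by (simp add: words_def)
  have lab: "\<And>j. j < n \<Longrightarrow> Suc (?p j) = sig al bm (Suc j)" using pp_lab[OF al b0] by simp
  have "{j1, j2, j3} \<in> K n g1 \<longleftrightarrow>
      ((j1+1) XOR (j2+1) XOR (j3+1) = g1 (rho (uu (j1+1)) XOR rho (uu (j2+1)) XOR rho (uu (j3+1))))"
    using w1 j by (simp add: K_def Sy3 Ry3)
  also have "\<dots> \<longleftrightarrow> (sig al bm (j1+1) XOR sig al bm (j2+1) XOR sig al bm (j3+1) =
      g2 (rho (uu (sig al bm (j1+1))) XOR rho (uu (sig al bm (j2+1))) XOR rho (uu (sig al bm (j3+1)))))"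
    by (rule lab_iff[OF al g1 g2 C])
  also have "\<dots> \<longleftrightarrow> {?p j1, ?p j2, ?p j3} \<in> K n g2"
    using w2 d j by (simp add: K_def Sy3 Ry3 lab)
  finally show ?thesis .
qed

lemma card3_words:
  assumes "b \<in> words n" "card b = 3"
  shows "\<exists>j1 j2 j3. b = {j1, j2, j3} \<and> j1 \<noteq> j2 \<and> j2 \<noteq> j3 \<and> j1 \<noteq> j3 \<and> j1 < n \<and> j2 < n \<and> j3 < n"
proof -
  obtain x y z where b: "b = {x, y, z}" "x \<noteq> y" "y \<noteq> z" "x \<noteq> z"
    using assms(2) by (auto simp: card_3_iff)
  have "x < n" "y < n" "z < n" using assms(1) b by (auto simp: words_def)
  then show ?thesis using b by blast
qed

lemma perm_W3:
  assumes n: "n = 2 ^ k - 1" and k: "k \<ge> 4" and al: "linal al" and b0: "bb bm 0 = 0"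
    and g1: "good g1" and g2: "good g2" and C: "Cond al bm g1 g2"
  shows "perm_code (pp n al bm) (W3 n g1) = W3 n g2"
proof
  let ?p = "pp n al bm"
  have perm: "?p permutes {0..<n}" by (rule pp_perm[OF n k al b0])
  have inj: "inj ?p" by (rule permutes_inj[OF perm])
  have img: "?p ` {0..<n} = {0..<n}" by (rule permutes_image[OF perm])
  note TI = triple_iff[OF n k al b0 g1 g2 C]
  show "perm_code ?p (W3 n g1) \<subseteq> W3 n g2"
  proof
    fix b' assume "b' \<in> perm_code ?p (W3 n g1)"
    then obtain b where b: "b \<in> W3 n g1" and b': "b' = ?p ` b"
      by (auto simp: perm_code_def perm_word_def)
    have bw: "b \<in> words n" and bc: "card b = 3" and bK: "b \<in> K n g1" using b by (auto simp: W3_def K_def)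
    obtain j1 j2 j3 where jj: "b = {j1, j2, j3}" "j1 \<noteq> j2" "j2 \<noteq> j3" "j1 \<noteq> j3" "j1 < n" "j2 < n" "j3 < n"
      using card3_words[OF bw bc] by blast
    have "b' = {?p j1, ?p j2, ?p j3}" using b' jj by auto
    moreover have "{?p j1, ?p j2, ?p j3} \<in> K n g2" using TI[of j1 j2 j3] jj bK by simp
    moreover have "card b' = 3" using b' bc inj by (simp add: card_image inj_on_subset)
    ultimately show "b' \<in> W3 n g2" by (simp add: W3_def)
  qed
  show "W3 n g2 \<subseteq> perm_code ?p (W3 n g1)"
  proof
    fix b' assume b': "b' \<in> W3 n g2"
    have bw: "b' \<in> words n" and bc: "card b' = 3" and bK: "b' \<in> K n g2" using b' by (auto simp: W3_def K_def)
    obtain i1 i2 i3 where ii: "b' = {i1, i2, i3}" "i1 \<noteq> i2" "i2 \<noteq> i3" "i1 \<noteq> i3" "i1 < n" "i2 < n" "i3 < n"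
      using card3_words[OF bw bc] by blast
    obtain j1 where j1: "j1 < n" "?p j1 = i1" using img ii by (metis atLeastLessThan_iff imageE zero_le)
    obtain j2 where j2: "j2 < n" "?p j2 = i2" using img ii by (metis atLeastLessThan_iff imageE zero_le)
    obtain j3 where j3: "j3 < n" "?p j3 = i3" using img ii by (metis atLeastLessThan_iff imageE zero_le)
    have dj: "j1 \<noteq> j2" "j2 \<noteq> j3" "j1 \<noteq> j3" using ii j1 j2 j3 by auto
    define b where "b = {j1, j2, j3}"
    have bK1: "b \<in> K n g1" using TI[OF j1(1) j2(1) j3(1) dj] bK ii j1 j2 j3 by (simp add: b_def)
    have "card b = 3" using dj by (simp add: b_def)
    then have "b \<in> W3 n g1" using bK1 by (simp add: W3_def)
    moreover have "b' = perm_word ?p b" using ii j1 j2 j3 by (simp add: perm_word_def b_def)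
    ultimately show "b' \<in> perm_code ?p (W3 n g1)" by (simp add: perm_code_def)
  qed
qed

definition mu :: "nat \<Rightarrow> nat" where "mu r = (if r \<in> {14, 50, 60, 90} then 1 else 0)"
definition al1 :: "nat \<Rightarrow> nat" where "al1 u = [0,2,3,1,6,4,5,7] ! u"
definition R8 :: "nat list" where "R8 = [0,14,50,84,104,152,164,194]"
definition H7 :: "nat list" where "H7 = [0,14,50,60,84,90,102,104,150,152,164,170,194,204,240,254]"

lemma good_mu: "good mu" by (simp add: good_def mu_def)

lemma linal_id: "linal (\<lambda>u. u)" by (simp add: linal_def)

lemma linal_al1: "linal al1"
  unfolding linal_def all8 by (simp add: al1_def)

lemma rline: "\<forall>u1<8. \<forall>u2<8. rho u1 XOR rho u2 XOR rho (u1 XOR u2) \<in> set R8"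
  unfolding all8 by (simp add: rho_def R8_def)

lemma H7_closed: "\<forall>h\<in>set H7. \<forall>t\<in>set R8. h XOR t \<in> set H7"
  by (simp add: H7_def R8_def)

lemma xor_ac_step: "((a::nat) XOR r) XOR c = (r XOR b) XOR (a XOR b XOR c)"
  by (simp add: xor.assoc xor.left_commute xor.commute)

lemma Ry_H7_gen: "finite y \<Longrightarrow> Ry y XOR rho (uu (Sy y)) \<in> set H7"
proof (induction y rule: finite_induct)
  case empty then show ?case by (simp add: Ry_def Sy_def uu_def rho_def H7_def)
next
  case (insert x F)
  define u where "u = uu (x + 1)"
  define U where "U = uu (Sy F)"
  have R: "Ry (insert x F) = rho u XOR Ry F" using insert by (simp add: Ry_def u_def)
  have S: "uu (Sy (insert x F)) = u XOR U" using insert by (simp add: Sy_def u_def U_def uux)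
  have t: "rho u XOR rho U XOR rho (u XOR U) \<in> set R8" using rline uu_lt by (simp add: u_def U_def)
  have "Ry (insert x F) XOR rho (uu (Sy (insert x F))) =
        (Ry F XOR rho U) XOR (rho u XOR rho U XOR rho (u XOR U))"
    unfolding R S by (rule xor_ac_step)
  moreover have "Ry F XOR rho U \<in> set H7" using insert by (simp add: U_def)
  ultimately show ?case using t H7_closed by simp
qed

lemma Ry_H7:
  assumes "y \<in> K n g" "good g"
  shows "Ry y \<in> set H7"
proof -
  have fy: "finite y" using assms by (auto simp: K_def intro: words_finite)
  have "Sy y \<le> 1" using assms by (auto simp: K_def good_def)
  then have "uu (Sy y) = 0" by (auto simp: uu_def)
  then show ?thesis using Ry_H7_gen[OF fy] by (simp add: rho_def)
qed

definition walpha :: "nat \<Rightarrow> nat \<Rightarrow> nat" where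
  "walpha d = (if d \<in> {14, 50, 84, 104, 152, 164, 194, 254} then al1 else (\<lambda>u. u))"

definition wbm :: "nat \<Rightarrow> nat" where
  "wbm d = (if d = 14 then 22 else if d = 50 then 14 else if d = 60 then 14 else if d = 90 then 22
     else if d = 102 then 24 else if d = 104 then 24 else if d = 150 then 20 else if d = 152 then 30
     else if d = 164 then 8 else if d = 170 then 20 else if d = 194 then 8 else if d = 204 then 2
     else if d = 240 then 2 else if d = 254 then 30 else 0)"

lemma wit_linal: "linal (walpha d)"
  using linal_id linal_al1 by (simp add: walpha_def)

lemma wit_b0: "bb (wbm d) 0 = 0"
  by (simp add: wbm_def bb_def)

lemma wit_cond:
  assumes "d \<in> set H7"
  shows "Cond (walpha d) (wbm d) (shf mu d) mu"
proof -
  have "d = 0 \<or> d = 14 \<or> d = 50 \<or> d = 60 \<or> d = 84 \<or> d = 90 \<or> d = 102 \<or> d = 104 \<or> d = 150 \<or>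
        d = 152 \<or> d = 164 \<or> d = 170 \<or> d = 194 \<or> d = 204 \<or> d = 240 \<or> d = 254"
    using assms by (simp add: H7_def)
  then show ?thesis
    by (elim disjE; simp only: Cond_def all8; simp add: walpha_def wbm_def shf_def mu_def rho_def bb_def al1_def)
qed

lemma homogeneous_K:
  assumes n: "n = 2 ^ k - 1" and k: "k \<ge> 4"
  shows "homogeneous_code n (K n mu)"
  unfolding homogeneous_code_def
proof
  fix y assume y: "y \<in> K n mu"
  define d where "d = Ry y"
  have dH: "d \<in> set H7" using Ry_H7[OF y good_mu] by (simp add: d_def)
  have "STS (K n mu) y = W3 n (shf mu d)" using STS_K[OF good_mu y] by (simp add: d_def)
  moreover have "STS (K n mu) {} = W3 n mu" by (rule STS_K0)
  moreover have "perm_code (pp n (walpha d) (wbm d)) (W3 n (shf mu d)) = W3 n mu"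
    by (rule perm_W3[OF n k wit_linal wit_b0 good_shf[OF good_mu] good_mu wit_cond[OF dH]])
  moreover have "pp n (walpha d) (wbm d) permutes {0..<n}" by (rule pp_perm[OF n k wit_linal wit_b0])
  ultimately show "\<exists>\<pi>. \<pi> permutes {0..<n} \<and> perm_code \<pi> (STS (K n mu) y) = STS (K n mu) {}" by auto
qed

subsection \<open>An invariant of codes under coordinate permutations\<close>

lemma perm_word_wadd: "inj \<pi> \<Longrightarrow> perm_word \<pi> (wadd x y) = wadd (perm_word \<pi> x) (perm_word \<pi> y)"
  by (auto simp: perm_word_def wadd_def image_set_diff image_Un)

lemma card_perm_word: "inj \<pi> \<Longrightarrow> card (perm_word \<pi> x) = card x"
  by (simp add: perm_word_def card_image inj_on_subset)

lemma STS_perm: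
  assumes inj: "inj \<pi>"
  shows "STS (perm_code \<pi> D) (perm_word \<pi> y) = perm_code \<pi> (STS D y)"
proof -
  have "wadd (perm_word \<pi> y) ` perm_code \<pi> D = perm_word \<pi> ` (wadd y ` D)"
    by (auto simp: perm_code_def perm_word_wadd[OF inj] image_image)
  then show ?thesis
    by (auto simp: STS_alt perm_code_def card_perm_word[OF inj])
qed

definition Inv :: "nat set set \<Rightarrow> nat" where
  "Inv D = card ((\<lambda>b. STS D b) ` STS D {})"

lemma inj_perm_code: "inj \<pi> \<Longrightarrow> inj (perm_code \<pi>)"
proof -
  assume inj: "inj \<pi>"
  have i1: "inj (perm_word \<pi>)" unfolding perm_word_def using inj
    by (auto intro!: injI simp: inj_image_eq_iff)
  show ?thesis unfolding perm_code_def using i1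
    by (auto intro!: injI simp: inj_image_eq_iff)
qed

lemma Inv_perm:
  assumes inj: "inj \<pi>"
  shows "Inv (perm_code \<pi> D) = Inv D"
proof -
  have e0: "STS (perm_code \<pi> D) {} = perm_code \<pi> (STS D {})"
    using STS_perm[OF inj, of D "{}"] by (simp add: perm_word_def)
  have "(\<lambda>b. STS (perm_code \<pi> D) b) ` STS (perm_code \<pi> D) {} =
        (\<lambda>b. STS (perm_code \<pi> D) (perm_word \<pi> b)) ` STS D {}"
  proof -
    have e0': "STS (perm_code \<pi> D) {} = perm_word \<pi> ` (STS D {})" using e0 by (simp add: perm_code_def)
    show ?thesis by (simp only: e0' image_image)
  qed
  also have "\<dots> = perm_code \<pi> ` ((\<lambda>b. STS D b) ` STS D {})"
    by (simp add: STS_perm[OF inj] image_image)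
  finally show ?thesis unfolding Inv_def
    using inj_perm_code[OF inj] by (simp add: card_image inj_on_subset)
qed

lemma W3_Ry:
  assumes g: "good g" and b: "b \<in> W3 n g"
  shows "Ry b \<in> set R8"
proof -
  have bw: "b \<in> words n" and bc: "card b = 3" and bS: "Sy b = g (Ry b)" using b by (auto simp: W3_def K_def)
  obtain j1 j2 j3 where jj: "b = {j1, j2, j3}" "j1 \<noteq> j2" "j2 \<noteq> j3" "j1 \<noteq> j3"
    using card3_words[OF bw bc] by blast
  have "Sy b \<le> 1" using bS g by (simp add: good_def)
  then have "uu (Sy b) = 0" by (auto simp: uu_def)
  then have "uu (j1+1) XOR uu (j2+1) XOR uu (j3+1) = 0" using jj by (simp add: Sy3 uux)
  then have u3: "uu (j3+1) = uu (j1+1) XOR uu (j2+1)" by (simp add: xor.assoc[symmetric] xor_eq0)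
  have "Ry b = rho (uu (j1+1)) XOR rho (uu (j2+1)) XOR rho (uu (j1+1) XOR uu (j2+1))"
    using jj u3 by (simp add: Ry3)
  then show ?thesis using rline uu_lt by simp
qed

lemma Sy_expl: "Sy {a, b, c} = (a + 1) XOR (b + 1) XOR (c + 1)" if "a \<noteq> b" "b \<noteq> c" "a \<noteq> c"
  using Sy3 that by blast

lemma W3_wit:
  assumes n: "n \<ge> 15" and r: "r \<in> set R8" and v: "v \<le> 1" and r0: "r = 0 \<Longrightarrow> v = 0"
  shows "\<exists>b. b \<in> words n \<and> card b = 3 \<and> Sy b = v \<and> Ry b = r"
proof -
  have sub: "\<And>b. b \<subseteq> {0..<14} \<Longrightarrow> b \<in> words n" using n by (auto simp: words_def)
  have vv: "v = 0 \<or> v = 1" using v by auto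
  have "r = 0 \<or> r = 14 \<or> r = 50 \<or> r = 84 \<or> r = 104 \<or> r = 152 \<or> r = 164 \<or> r = 194"
    using r by (simp add: R8_def)
  then show ?thesis
  proof (elim disjE)
    assume "r = 0" then show ?thesis using r0
      by (intro exI[of _ "{0,1,2}"]) (simp add: sub Sy_def Ry_def rho_def uu_def del: One_nat_def)
  next
    assume "r = 14" then show ?thesis using vv
      by (elim disjE; intro exI[of _ "{1 + v, 3, 5}"]) (simp_all add: sub Sy_def Ry_def rho_def uu_def del: One_nat_def)
  next
    assume "r = 50" then show ?thesis using vv
      by (elim disjE; intro exI[of _ "{1 + v, 7, 9}"]) (simp_all add: sub Sy_def Ry_def rho_def uu_def del: One_nat_def)
  next
    assume "r = 84" then show ?thesis using vv
      by (elim disjE; intro exI[of _ "{3 + v, 7, 11}"]) (simp_all add: sub Sy_def Ry_def rho_def uu_def del: One_nat_def)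
  next
    assume "r = 104" then show ?thesis using vv
      by (elim disjE; intro exI[of _ "{5 + v, 9, 11}"]) (simp_all add: sub Sy_def Ry_def rho_def uu_def del: One_nat_def)
  next
    assume "r = 152" then show ?thesis using vv
      by (elim disjE; intro exI[of _ "{5 + v, 7, 13}"]) (simp_all add: sub Sy_def Ry_def rho_def uu_def del: One_nat_def)
  next
    assume "r = 164" then show ?thesis using vv
      by (elim disjE; intro exI[of _ "{3 + v, 9, 13}"]) (simp_all add: sub Sy_def Ry_def rho_def uu_def del: One_nat_def)
  next
    assume "r = 194" then show ?thesis using vv
      by (elim disjE; intro exI[of _ "{1 + v, 11, 13}"]) (simp_all add: sub Sy_def Ry_def rho_def uu_def del: One_nat_def)
  qed
qed

lemma W3_eq_iff:
  assumes g1: "good g1" and g2: "good g2" and n: "n \<ge> 15"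
  shows "W3 n g1 = W3 n g2 \<longleftrightarrow> map g1 R8 = map g2 R8"
proof
  assume e: "W3 n g1 = W3 n g2"
  have "g1 r = g2 r" if r: "r \<in> set R8" for r
  proof -
    have v: "g1 r \<le> 1" using g1 by (simp add: good_def)
    have r0: "r = 0 \<Longrightarrow> g1 r = 0" using g1 by (simp add: good_def)
    obtain b where b: "b \<in> words n" "card b = 3" "Sy b = g1 r" "Ry b = r"
      using W3_wit[OF n r v r0] by blast
    have "b \<in> W3 n g1" using b by (simp add: W3_def K_def)
    then have "b \<in> W3 n g2" using e by simp
    then have "Sy b = g2 r" using b by (simp add: W3_def K_def)
    then show ?thesis using b by simp
  qed
  then show "map g1 R8 = map g2 R8" by simp
next
  assume e: "map g1 R8 = map g2 R8"
  then have ee: "\<And>r. r \<in> set R8 \<Longrightarrow> g1 r = g2 r" by simp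
  have "b \<in> W3 n g1 \<longleftrightarrow> b \<in> W3 n g2" for b
  proof
    assume b: "b \<in> W3 n g1"
    then have "Ry b \<in> set R8" by (rule W3_Ry[OF g1])
    then show "b \<in> W3 n g2" using b ee by (simp add: W3_def K_def)
  next
    assume b: "b \<in> W3 n g2"
    then have "Ry b \<in> set R8" by (rule W3_Ry[OF g2])
    then show "b \<in> W3 n g1" using b ee by (simp add: W3_def K_def)
  qed
  then show "W3 n g1 = W3 n g2" by blast
qed

lemma Ry_W3:
  assumes g: "good g" and n: "n \<ge> 15"
  shows "Ry ` W3 n g = set R8"
proof
  show "Ry ` W3 n g \<subseteq> set R8" using W3_Ry[OF g] by blast
  show "set R8 \<subseteq> Ry ` W3 n g"
  proof
    fix r assume r: "r \<in> set R8"
    have v: "g r \<le> 1" using g by (simp add: good_def)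
    have r0: "r = 0 \<Longrightarrow> g r = 0" using g by (simp add: good_def)
    obtain b where b: "b \<in> words n" "card b = 3" "Sy b = g r" "Ry b = r"
      using W3_wit[OF n r v r0] by blast
    have "b \<in> W3 n g" using b by (simp add: W3_def K_def)
    then show "r \<in> Ry ` W3 n g" using b by force
  qed
qed

lemma card_kernel:
  assumes "\<And>x y. x \<in> A \<Longrightarrow> y \<in> A \<Longrightarrow> f x = f y \<longleftrightarrow> h x = h y"
  shows "card (f ` A) = card (h ` A)"
proof -
  let ?F = "\<lambda>z. h (inv_into A f z)"
  have "bij_betw ?F (f ` A) (h ` A)"
  proof (rule bij_betw_imageI)
    show "inj_on ?F (f ` A)"
    proof (rule inj_onI)
      fix z1 z2 assume z1: "z1 \<in> f ` A" and z2: "z2 \<in> f ` A" and e: "?F z1 = ?F z2"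
      have i1: "inv_into A f z1 \<in> A" "f (inv_into A f z1) = z1" using z1 by (auto intro: inv_into_into f_inv_into_f)
      have i2: "inv_into A f z2 \<in> A" "f (inv_into A f z2) = z2" using z2 by (auto intro: inv_into_into f_inv_into_f)
      show "z1 = z2" using assms[OF i1(1) i2(1)] e i1(2) i2(2) by simp
    qed
    show "?F ` f ` A = h ` A"
    proof
      show "?F ` f ` A \<subseteq> h ` A" by (auto intro: inv_into_into)
      show "h ` A \<subseteq> ?F ` f ` A"
      proof
        fix z assume "z \<in> h ` A"
        then obtain x where x: "x \<in> A" "z = h x" by auto
        have i: "inv_into A f (f x) \<in> A" "f (inv_into A f (f x)) = f x" using x by (auto intro: inv_into_into f_inv_into_f)
        have "h (inv_into A f (f x)) = h x" using assms[OF i(1) x(1)] i(2) by simp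
        then show "z \<in> ?F ` f ` A" using x by force
      qed
    qed
  qed
  then show ?thesis by (rule bij_betw_same_card)
qed

lemma Inv_K:
  assumes g: "good g" and n: "n \<ge> 15"
  shows "Inv (K n g) = card ((\<lambda>r. map (shf g r) R8) ` set R8)"
proof -
  have "(\<lambda>b. STS (K n g) b) ` STS (K n g) {} = (\<lambda>b. W3 n (shf g (Ry b))) ` W3 n g"
    using STS_K[OF g] by (auto simp: STS_K0 W3_def)
  also have "\<dots> = (\<lambda>r. W3 n (shf g r)) ` (Ry ` W3 n g)" by (simp add: image_image)
  also have "\<dots> = (\<lambda>r. W3 n (shf g r)) ` set R8" by (simp add: Ry_W3[OF g n])
  finally have "Inv (K n g) = card ((\<lambda>r. W3 n (shf g r)) ` set R8)" by (simp add: Inv_def)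
  also have "\<dots> = card ((\<lambda>r. map (shf g r) R8) ` set R8)"
    by (rule card_kernel) (rule W3_eq_iff[OF good_shf[OF g] good_shf[OF g] n])
  finally show ?thesis .
qed

lemma inv_mu: "card ((\<lambda>r. map (shf mu r) R8) ` set R8) = 7"
  by (simp add: R8_def shf_def mu_def)

lemma inv_mu150: "card ((\<lambda>r. map (shf (shf mu 150) r) R8) ` set R8) = 6"
  by (simp add: R8_def shf_def mu_def card_insert_if)

lemma not_transitive_K:
  assumes n: "n = 2 ^ k - 1" and k: "k \<ge> 4"
  shows "\<not> transitive_code n (K n mu)"
proof
  assume tr: "transitive_code n (K n mu)"
  have "(2::nat) ^ 4 \<le> 2 ^ k" by (rule power_increasing[OF k]) simp
  then have n15: "n \<ge> 15" using n by simp
  define y0 :: "nat set" where "y0 = {1, 3, 7, 13}"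
  have Ry0: "Ry y0 = 150" by (simp add: y0_def Ry_def rho_def uu_def)
  have Sy0: "Sy y0 = 0" by (simp add: y0_def Sy_def del: One_nat_def)
  have y0w: "y0 \<in> words n" using n15 by (auto simp: y0_def words_def)
  have y0K: "y0 \<in> K n mu" using y0w Ry0 Sy0 by (simp add: K_def mu_def)
  obtain \<pi> where p: "\<pi> permutes {0..<n}" and e: "wadd y0 ` perm_code \<pi> (K n mu) = K n mu"
    using tr y0K unfolding transitive_code_def by blast
  have inj: "inj \<pi>" by (rule permutes_inj[OF p])
  have "perm_code \<pi> (K n mu) = wadd y0 ` (wadd y0 ` perm_code \<pi> (K n mu))"
    by (simp add: image_image)
  also have "\<dots> = wadd y0 ` K n mu" by (simp only: e)
  also have "\<dots> = K n (shf mu 150)" using K_trans[OF good_mu y0K] Ry0 by simp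
  finally have eq: "perm_code \<pi> (K n mu) = K n (shf mu 150)" .
  have "Inv (K n mu) = Inv (perm_code \<pi> (K n mu))" by (simp add: Inv_perm[OF inj])
  also have "\<dots> = Inv (K n (shf mu 150))" by (simp add: eq)
  also have "\<dots> = 6" using Inv_K[OF good_shf[OF good_mu] n15] inv_mu150 by simp
  finally have "Inv (K n mu) = 6" .
  moreover have "Inv (K n mu) = 7" using Inv_K[OF good_mu n15] inv_mu by simp
  ultimately show False by simp
qed

theorem theorem5:
  fixes k :: nat
  assumes "2 ^ k - 1 \<ge> (15::nat)"
  shows "\<exists>C. perfect_code (2 ^ k - 1) C \<and> homogeneous_code (2 ^ k - 1) C
             \<and> \<not> transitive_code (2 ^ k - 1) C"
proof -
  have k: "k \<ge> 4"
  proof (rule ccontr)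
    assume "\<not> k \<ge> 4"
    then have "k \<le> 3" by simp
    then have "(2::nat) ^ k \<le> 2 ^ 3" by (rule power_increasing) simp
    then show False using assms by simp
  qed
  have k1: "k \<ge> 1" using k by simp
  show ?thesis
    using perfect_K[OF refl k1 good_mu] homogeneous_K[OF refl k] not_transitive_K[OF refl k] by blast
qed

end
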